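(* Let $p\ge1$, $n\ge1$, $i\in\{1,\dots,p\}$, and let $C_n^i$ be the cycle of the Schreier graph $\Gamma^p_n$ with vertex set $\{0,i\}^n$ and the edges labelled $e_i$ between them. Let $\phi_n^i$ be the nontrivial automorphism (reflection) of the cycle $C_n^i$ fixing $0^n$. Then for every vertex $v$ of $C_n^i$, the decorations attached at $v$ and at $\phi_n^i(v)$ are isomorphic graphs. Moreover, the vertices $v'$ of $C_n^i$ with $d(0^n,v')=d(0^n,v)$ are exactly $v$ and $\phi_n^i(v)$.
   Context: $X=\{0,1,\dots,p\}$; the star automaton group $\mathcal G_{S_p}$ is generated by the transformations $e_1,\dots,e_p$ of $X^\ast$ defined recursively by $e_i(0w)=i\,e_i(w)$, $e_i(iw)=0w$, $e_i(jw)=jw$ for $j\notin\{0,i\}$. $\Gamma^p_n$ has vertex set $X^n$ and, for each $v$ and each $j$, an edge labelled $e_j$ joining $v$ and $e_j(v)$ (loops allowed). $C_n^i$ is the $e_i$-orbit of $0^n$, a cycle of length $2^n$. For a vertex $v$ of $C_n^i$, the decoration attached at $v$ is the connected component containing $v$ of the graph obtained from $\Gamma^p_n$ by deleting the edges of $C_n^i$. $d$ denotes the graph distance in $\Gamma^p_n$. *)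

theory Defs
  imports Main
begin

text \<open>Words over X = {0,...,p} are lists of naturals. The generator e_i of the star
automaton group acts on words by the given recursion.\<close>

fun star_gen :: "nat \<Rightarrow> nat list \<Rightarrow> nat list" where
  "star_gen i [] = []"
| "star_gen i (x # w) =
     (if x = 0 then i # star_gen i w else if x = i then 0 # w else x # w)"

definition verts :: "nat \<Rightarrow> nat \<Rightarrow> nat list set" where
  "verts p n = {w. length w = n \<and> set w \<subseteq> {0..p}}"

text \<open>Edges of Gamma^p_n: for each vertex v and each j in {1..p} one edge (v,j),
labelled e_j, joining v and e_j(v) (loops allowed, multigraph).\<close>
definition edges :: "nat \<Rightarrow> nat \<Rightarrow> (nat list \<times> nat) set" where
  "edges p n = {(v, j). v \<in> verts p n \<and> j \<in> {1..p}}"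

definition ends :: "nat list \<times> nat \<Rightarrow> nat list set" where
  "ends x = {fst x, star_gen (snd x) (fst x)}"

definition zeros :: "nat \<Rightarrow> nat list" where
  "zeros n = replicate n 0"

definition cyc :: "nat \<Rightarrow> nat \<Rightarrow> nat list set" where
  "cyc i n = {(star_gen i ^^ k) (zeros n) | k. True}"

text \<open>The reflection phi_n^i of the cycle fixing 0^n:
e_i^k(0^n) \<mapsto> e_i^(2^n - k)(0^n) = e_i^(-k)(0^n).\<close>
definition phi :: "nat \<Rightarrow> nat \<Rightarrow> nat list \<Rightarrow> nat list" where
  "phi i n v = (star_gen i ^^ (2 ^ n - (LEAST k. (star_gen i ^^ k) (zeros n) = v))) (zeros n)"

definition deco_edges_all :: "nat \<Rightarrow> nat \<Rightarrow> nat \<Rightarrow> (nat list \<times> nat) set" where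
  "deco_edges_all p n i = {x \<in> edges p n. \<not> (snd x = i \<and> fst x \<in> cyc i n)}"

definition link_rel :: "(nat list \<times> nat) set \<Rightarrow> nat list rel" where
  "link_rel E = {(a, b). \<exists>x\<in>E. ends x = {a, b}}"

text \<open>Decoration attached at v: the connected component containing v of Gamma^p_n
minus the edges of C_n^i (vertex set and edge set).\<close>
definition deco_verts :: "nat \<Rightarrow> nat \<Rightarrow> nat \<Rightarrow> nat list \<Rightarrow> nat list set" where
  "deco_verts p n i v = {w. (v, w) \<in> (link_rel (deco_edges_all p n i))\<^sup>*}"

definition deco_edges :: "nat \<Rightarrow> nat \<Rightarrow> nat \<Rightarrow> nat list \<Rightarrow> (nat list \<times> nat) set" where
  "deco_edges p n i v = {x \<in> deco_edges_all p n i. fst x \<in> deco_verts p n i v}"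

definition mg_iso :: "'v set \<Rightarrow> 'e set \<Rightarrow> 'v set \<Rightarrow> 'e set \<Rightarrow> ('e \<Rightarrow> 'v set) \<Rightarrow> bool" where
  "mg_iso V1 E1 V2 E2 en \<longleftrightarrow>
     (\<exists>f g. bij_betw f V1 V2 \<and> bij_betw g E1 E2 \<and> (\<forall>x\<in>E1. en (g x) = f ` en x))"

definition gdist :: "nat \<Rightarrow> nat \<Rightarrow> nat list \<Rightarrow> nat list \<Rightarrow> nat" where
  "gdist p n u w = (LEAST k. (u, w) \<in> link_rel (edges p n) ^^ k)"

end

theory Submission imports Defs begin

abbreviation e where "e \<equiv> star_gen"

lemma len_e[simp]: "length (star_gen j w) = length w"
  by (induction w) auto

lemma set_e_p: "set w \<subseteq> {0..p} \<Longrightarrow> j \<le> p \<Longrightarrow> set (star_gen j w) \<subseteq> {0..p}"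
  by (induction w) auto

lemma set_e_01: "set (star_gen i w) \<subseteq> {0,i} \<longleftrightarrow> set w \<subseteq> {0,i}"
  by (induction w) auto

lemma inj_e: "inj (star_gen j)"
proof -
  have "\<forall>b. star_gen j a = star_gen j b \<longrightarrow> a = b" for a
  proof (induction a)
    case Nil then show ?case by (metis len_e length_0_conv)
  next
    case (Cons x a) show ?case
    proof
      fix b show "star_gen j (x # a) = star_gen j b \<longrightarrow> x # a = b"
        using Cons by (cases b) (auto split: if_splits)
    qed
  qed
  then show ?thesis unfolding inj_def by blast
qed

lemma e_append: "star_gen j (t @ w) = star_gen j t @ (if set t \<subseteq> {0} then star_gen j w else w)"
  by (induction t) auto

lemma zeros_Suc: "zeros (Suc n) = 0 # zeros n" by (simp add: zeros_def)

lemma E2: "i \<noteq> 0 \<Longrightarrow> x \<in> {0,i} \<Longrightarrow> (star_gen i ^^ (2*k)) (x # w) = x # (star_gen i ^^ k) w"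
proof (induction k)
  case 0 then show ?case by simp
next
  case (Suc k)
  have "(star_gen i ^^ (2*Suc k)) (x # w) = star_gen i (star_gen i ((star_gen i ^^ (2*k)) (x # w)))"
    by (simp add: mult_2)
  also have "\<dots> = x # (star_gen i ^^ Suc k) w" using Suc by auto
  finally show ?case .
qed

lemma E2odd: "i \<noteq> 0 \<Longrightarrow> (star_gen i ^^ (Suc (2*k))) (0 # w) = i # (star_gen i ^^ Suc k) w"
  using E2[of i 0 k w] by simp

lemma per: "i \<noteq> 0 \<Longrightarrow> (star_gen i ^^ (2^n)) (zeros n) = zeros n"
proof (induction n)
  case 0 then show ?case by (simp add: zeros_def)
next
  case (Suc n) then show ?case using E2[of i 0 "2^n" "zeros n"] by (simp add: zeros_Suc)
qed

lemma perq: "i \<noteq> 0 \<Longrightarrow> (star_gen i ^^ (2^n * q)) (zeros n) = zeros n"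
proof (induction q)
  case 0 then show ?case by simp
next
  case (Suc q)
  have "(star_gen i ^^ (2^n * Suc q)) (zeros n) = (star_gen i ^^ (2^n * q)) ((star_gen i ^^ (2^n)) (zeros n))"
    by (metis comp_apply funpow_add mult_Suc_right add.commute)
  then show ?case using Suc per by simp
qed

lemma modk: "i \<noteq> 0 \<Longrightarrow> (star_gen i ^^ k) (zeros n) = (star_gen i ^^ (k mod 2^n)) (zeros n)"
proof -
  assume i: "i \<noteq> 0"
  have "k = k mod 2^n + 2^n * (k div 2^n)" by simp
  then have "(star_gen i ^^ k) (zeros n) = (star_gen i ^^ (k mod 2^n)) ((star_gen i ^^ (2^n * (k div 2^n))) (zeros n))"
    by (metis comp_apply funpow_add)
  then show ?thesis using perq[OF i] by simp
qed

lemma Pdvd: "i \<noteq> 0 \<Longrightarrow> (star_gen i ^^ d) (zeros n) = zeros n \<Longrightarrow> 2^n dvd d"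
proof (induction n arbitrary: d)
  case 0 then show ?case by simp
next
  case (Suc n)
  have eq: "(star_gen i ^^ d) (0 # zeros n) = 0 # zeros n" using Suc.prems(2) by (simp only: zeros_Suc)
  show ?case
  proof (cases "even d")
    case True
    define k where "k = d div 2"
    have d: "d = 2*k" using True unfolding k_def by simp
    have "(star_gen i ^^ (2*k)) (0 # zeros n) = 0 # (star_gen i ^^ k) (zeros n)"
      using E2[of i 0 k "zeros n"] Suc.prems(1) by blast
    then have "0 # (star_gen i ^^ k) (zeros n) = 0 # zeros n" using eq d by metis
    then have "(star_gen i ^^ k) (zeros n) = zeros n" by blast
    then have "2^n dvd k" using Suc.IH Suc.prems(1) by blast
    then show ?thesis using d by simp
  next
    case False
    define k where "k = d div 2"
    have d: "d = Suc (2*k)" using False unfolding k_def by presburger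
    have "(star_gen i ^^ (Suc (2*k))) (0 # zeros n) = i # (star_gen i ^^ Suc k) (zeros n)"
      using E2odd[of i k "zeros n"] Suc.prems(1) by blast
    then have "i # (star_gen i ^^ Suc k) (zeros n) = 0 # zeros n" using eq d by metis
    then show ?thesis using Suc.prems(1) by blast
  qed
qed

lemma distinct_pow: assumes i: "i \<noteq> 0" and a: "a < 2^n" and b: "b < 2^n"
  and eq: "(star_gen i ^^ a) (zeros n) = (star_gen i ^^ b) (zeros n)" shows "a = b"
proof (rule ccontr)
  assume "a \<noteq> b"
  then consider "a < b" | "b < a" by linarith
  then show False
  proof cases
    case 1
    have "(star_gen i ^^ a) ((star_gen i ^^ (b - a)) (zeros n)) = (star_gen i ^^ a) (zeros n)"
      using eq 1 by (metis comp_apply funpow_add le_add_diff_inverse less_imp_le)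
    then have "(star_gen i ^^ (b - a)) (zeros n) = zeros n"
      using inj_fn[OF inj_e, of a i] by (simp add: inj_eq)
    then have "2^n dvd (b - a)" using Pdvd i by blast
    then have "2^n \<le> b - a" using dvd_imp_le 1 by simp
    then show False using b by linarith
  next
    case 2
    have "(star_gen i ^^ b) ((star_gen i ^^ (a - b)) (zeros n)) = (star_gen i ^^ b) (zeros n)"
      using eq 2 by (metis comp_apply funpow_add le_add_diff_inverse less_imp_le)
    then have "(star_gen i ^^ (a - b)) (zeros n) = zeros n"
      using inj_fn[OF inj_e, of b i] by (simp add: inj_eq)
    then have "2^n dvd (a - b)" using Pdvd i by blast
    then have "2^n \<le> a - b" using dvd_imp_le 2 by simp
    then show False using a by linarith
  qed
qed

definition pos :: "nat \<Rightarrow> nat \<Rightarrow> nat list \<Rightarrow> nat" where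
  "pos i n w = (LEAST k. (star_gen i ^^ k) (zeros n) = w)"

lemma pos_pow: assumes i: "i \<noteq> 0" shows "pos i n ((star_gen i ^^ k) (zeros n)) = k mod 2^n"
  unfolding pos_def
proof (rule Least_equality)
  show "(star_gen i ^^ (k mod 2 ^ n)) (zeros n) = (star_gen i ^^ k) (zeros n)" using modk[OF i] by simp
  fix y assume y: "(star_gen i ^^ y) (zeros n) = (star_gen i ^^ k) (zeros n)"
  show "k mod 2^n \<le> y"
  proof (rule ccontr)
    assume a: "\<not> k mod 2^n \<le> y"
    have b: "k mod 2^n < 2^n" by simp
    have "y < 2^n" "y < k mod 2^n" using a b by linarith+
    then show False using distinct_pow[OF i, of y n "k mod 2^n"] y modk[OF i, of k n] by simp
  qed
qed

lemma surj_cyc: "i \<noteq> 0 \<Longrightarrow> length w = n \<Longrightarrow> set w \<subseteq> {0,i} \<Longrightarrow> \<exists>k. (star_gen i ^^ k) (zeros n) = w"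
proof (induction w arbitrary: n)
  case Nil then show ?case by (auto simp: zeros_def intro: exI[of _ 0])
next
  case (Cons x w)
  then obtain m where n: "n = Suc m" by auto
  from Cons n obtain k where k: "(star_gen i ^^ k) (zeros m) = w" by auto
  show ?case
  proof (cases "x = 0")
    case True then show ?thesis using E2[of i 0 k "zeros m"] k n Cons.prems by (auto simp: zeros_Suc)
  next
    case False
    then have x: "x = i" using Cons.prems by auto
    have "(star_gen i ^^ (k + 2^m)) (zeros m) = w" using k per[of i m] Cons.prems
      by (simp add: funpow_add)
    moreover obtain k' where "k + 2^m = Suc k'" using not0_implies_Suc[of "k + 2^m"] by auto
    ultimately have "(star_gen i ^^ Suc (2*k')) (zeros n) = x # w"
      using E2odd[of i k' "zeros m"] x n Cons.prems by (simp add: zeros_Suc)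
    then show ?thesis by blast
  qed
qed

lemma pow_01: "set w \<subseteq> {0,i} \<Longrightarrow> set ((star_gen i ^^ k) w) \<subseteq> {0,i}"
  by (induction k) (auto simp: set_e_01)

lemma pow_len[simp]: "length ((star_gen i ^^ k) w) = length w"
  by (induction k) auto

lemma cyc_char: "i \<noteq> 0 \<Longrightarrow> cyc i n = {w. length w = n \<and> set w \<subseteq> {0,i}}"
proof -
  assume i: "i \<noteq> 0"
  have z: "set (zeros n) \<subseteq> {0,i}" "length (zeros n) = n" by (auto simp: zeros_def)
  show ?thesis unfolding cyc_def
  proof (intro set_eqI iffI)
    fix w assume "w \<in> {(star_gen i ^^ k) (zeros n) |k. True}"
    then obtain k where "w = (star_gen i ^^ k) (zeros n)" by blast
    then show "w \<in> {w. length w = n \<and> set w \<subseteq> {0, i}}" using z pow_01[OF z(1), of k] by simp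
  next
    fix w assume "w \<in> {w. length w = n \<and> set w \<subseteq> {0, i}}"
    then show "w \<in> {(star_gen i ^^ k) (zeros n) |k. True}" using surj_cyc[OF i, of w n] by auto
  qed
qed


definition swp :: "nat \<Rightarrow> nat \<Rightarrow> nat" where
  "swp i x = (if x = 0 then i else if x = i then 0 else x)"

fun refl :: "nat \<Rightarrow> nat list \<Rightarrow> nat list" where
  "refl i [] = []"
| "refl i (x # w) = (if x = i then i # map (swp i) w else x # refl i w)"

lemma L1: "i \<noteq> 0 \<Longrightarrow> set u \<subseteq> {0,i} \<Longrightarrow> star_gen i (refl i u) = map (swp i) u"
  by (induction u) (auto simp: swp_def)

lemma L2: "i \<noteq> 0 \<Longrightarrow> set u \<subseteq> {0,i} \<Longrightarrow> map (swp i) (star_gen i u) = refl i u"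
  by (induction u) (auto simp: swp_def)

lemma L3: "i \<noteq> 0 \<Longrightarrow> set w \<subseteq> {0,i} \<Longrightarrow> star_gen i (refl i (star_gen i w)) = refl i w"
proof (cases w)
  case Nil then show ?thesis by simp
next
  case (Cons x u)
  assume i: "i \<noteq> 0" and w: "set w \<subseteq> {0,i}"
  then have u: "set u \<subseteq> {0,i}" and x: "x = 0 \<or> x = i" using Cons by auto
  show ?thesis
  proof (cases "x = 0")
    case True then show ?thesis using Cons i L2[OF i u] by simp
  next
    case False then have "x = i" using x by simp
    then show ?thesis using Cons i L1[OF i u] by simp
  qed
qed

lemma L3k: "i \<noteq> 0 \<Longrightarrow> set w \<subseteq> {0,i} \<Longrightarrow> (star_gen i ^^ k) (refl i ((star_gen i ^^ k) w)) = refl i w"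
proof (induction k)
  case 0 then show ?case by simp
next
  case (Suc k)
  have "(star_gen i ^^ Suc k) (refl i ((star_gen i ^^ Suc k) w))
      = (star_gen i ^^ k) (star_gen i (refl i (star_gen i ((star_gen i ^^ k) w))))"
    by (simp add: funpow_swap1)
  also have "\<dots> = (star_gen i ^^ k) (refl i ((star_gen i ^^ k) w))"
    using L3[OF Suc.prems(1) pow_01[OF Suc.prems(2)]] by simp
  finally show ?case using Suc by simp
qed

lemma refl_zeros: "i \<noteq> 0 \<Longrightarrow> refl i (zeros n) = zeros n"
  by (induction n) (auto simp: zeros_Suc, simp add: zeros_def)

lemma refl_rep: "i \<noteq> 0 \<Longrightarrow> refl i (replicate m 0 @ i # s) = replicate m 0 @ i # map (swp i) s"
  by (induction m) auto

lemma decomp: "set w \<subseteq> {0,i} \<Longrightarrow> w \<noteq> replicate (length w) 0 \<Longrightarrow> \<exists>m s. w = replicate m 0 @ i # s"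
proof (induction w)
  case Nil then show ?case by simp
next
  case (Cons x w)
  show ?case
  proof (cases "x = 0")
    case True
    then have "w \<noteq> replicate (length w) 0" using Cons.prems by simp
    then obtain m s where "w = replicate m 0 @ i # s" using Cons by auto
    then have "x # w = replicate (Suc m) 0 @ i # s" using True by simp
    then show ?thesis by blast
  next
    case False then have "x = i" using Cons.prems by auto
    then have "x # w = replicate 0 0 @ i # w" by simp
    then show ?thesis by blast
  qed
qed

lemma phi_pos: "phi i n v = (star_gen i ^^ (2^n - pos i n v)) (zeros n)"
  unfolding phi_def pos_def by simp

lemma cyc_pos: assumes i: "i \<noteq> 0" and v: "v \<in> cyc i n"
  shows "pos i n v < 2^n" "(star_gen i ^^ pos i n v) (zeros n) = v"
proof -
  obtain k where k: "v = (star_gen i ^^ k) (zeros n)" using v unfolding cyc_def by blast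
  show "pos i n v < 2^n" using pos_pow[OF i, of n k] k by simp
  show "(star_gen i ^^ pos i n v) (zeros n) = v" using pos_pow[OF i, of n k] k modk[OF i, of k n] by simp
qed

lemma phi_refl: assumes i: "i \<noteq> 0" and v: "v \<in> cyc i n" shows "phi i n v = refl i v"
proof -
  let ?k = "pos i n v"
  have k: "?k < 2^n" "(star_gen i ^^ ?k) (zeros n) = v" using cyc_pos[OF i v] by auto
  have z: "set (zeros n) \<subseteq> {0,i}" by (auto simp: zeros_def)
  have "(star_gen i ^^ ?k) (phi i n v) = (star_gen i ^^ (?k + (2^n - ?k))) (zeros n)"
    unfolding phi_pos by (simp add: funpow_add)
  also have "\<dots> = zeros n" using k per[OF i] by simp
  also have "\<dots> = (star_gen i ^^ ?k) (refl i v)"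
    using L3k[OF i z, of ?k] k refl_zeros[OF i] by simp
  finally show ?thesis using inj_fn[OF inj_e, of ?k i] by (simp add: inj_eq)
qed


fun att :: "nat \<Rightarrow> nat list \<Rightarrow> nat list" where
  "att i [] = []"
| "att i (x # w) = (if x \<in> {0,i} \<and> set w \<subseteq> {0,i} then x # w else 0 # att i w)"

lemma A2: "set u \<subseteq> {0,i} \<Longrightarrow> att i u = u"
  by (cases u) auto

lemma att0: "att i (0 # w) = 0 # att i w"
  using A2[of w i] by auto

lemma attf: "x \<notin> {0,i} \<Longrightarrow> att i (x # w) = 0 # att i w"
  by auto

lemma A3: assumes "j \<noteq> i" "j \<noteq> 0" "i \<noteq> 0" shows "att i (star_gen j u) = att i u"
proof (induction u)
  case Nil then show ?case by simp
next
  case (Cons x w)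
  show ?case
  proof (cases "x = 0")
    case True then show ?thesis using assms Cons by (simp add: A2)
  next
    case False
    show ?thesis
    proof (cases "x = j")
      case True then show ?thesis using assms Cons by (simp add: A2)
    next
      case False then show ?thesis using assms \<open>x \<noteq> 0\<close> by simp
    qed
  qed
qed

lemma A4: assumes "i \<noteq> 0" shows "\<not> set u \<subseteq> {0,i} \<Longrightarrow> att i (star_gen i u) = att i u"
proof (induction u)
  case Nil then show ?case by simp
next
  case (Cons x w)
  show ?case
  proof (cases "x = 0")
    case True
    then have w: "\<not> set w \<subseteq> {0,i}" using Cons.prems by simp
    then have "\<not> set (star_gen i w) \<subseteq> {0,i}" using set_e_01 by blast
    then show ?thesis using True Cons.IH[OF w] assms w by (simp add: A2)
  next
    case False
    show ?thesis
    proof (cases "x = i")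
      case True
      then have w: "\<not> set w \<subseteq> {0,i}" using Cons.prems by simp
      then show ?thesis using True assms w by (simp add: A2)
    next
      case False then show ?thesis using \<open>x \<noteq> 0\<close> by simp
    qed
  qed
qed

definition cd :: "nat \<Rightarrow> nat \<Rightarrow> nat list \<Rightarrow> nat" where
  "cd i n w = min (pos i n w) (2^n - pos i n w)"

definition F :: "nat \<Rightarrow> nat \<Rightarrow> nat list \<Rightarrow> nat" where
  "F i n u = cd i n (att i u)"

lemma arith_cd: assumes "k < (N::nat)"
  shows "min (Suc k mod N) (N - Suc k mod N) \<le> min k (N - k) + 1"
    "min k (N - k) \<le> min (Suc k mod N) (N - Suc k mod N) + 1"
proof -
  have "Suc k < N \<or> Suc k = N" using assms by linarith
  then show "min (Suc k mod N) (N - Suc k mod N) \<le> min k (N - k) + 1"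
    "min k (N - k) \<le> min (Suc k mod N) (N - Suc k mod N) + 1" by auto
qed

lemma verts_len: "u \<in> verts p n \<Longrightarrow> length u = n" by (simp add: verts_def)

lemma e_verts: "u \<in> verts p n \<Longrightarrow> j \<in> {1..p} \<Longrightarrow> star_gen j u \<in> verts p n"
  unfolding verts_def using set_e_p by auto

lemma Lip: assumes i: "i \<in> {1..p}" and u: "u \<in> verts p n" and j: "j \<in> {1..p}"
  shows "F i n (star_gen j u) \<le> F i n u + 1 \<and> F i n u \<le> F i n (star_gen j u) + 1"
proof (cases "j = i \<and> set u \<subseteq> {0,i}")
  case True
  have i0: "i \<noteq> 0" using i by auto
  have uc: "u \<in> cyc i n" using True verts_len[OF u] cyc_char[OF i0] by auto
  let ?k = "pos i n u"
  have k: "?k < 2^n" "(star_gen i ^^ ?k) (zeros n) = u" using cyc_pos[OF i0 uc] by auto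
  have eq: "star_gen i u = (star_gen i ^^ Suc ?k) (zeros n)" using k by simp
  have pe: "pos i n (star_gen i u) = Suc ?k mod 2^n" unfolding eq by (rule pos_pow[OF i0])
  have "att i u = u" "att i (star_gen i u) = star_gen i u" using True A2 set_e_01 by auto
  then show ?thesis unfolding F_def cd_def using True pe arith_cd[OF k(1)] by simp
next
  case False
  have "att i (star_gen j u) = att i u"
  proof (cases "j = i")
    case True then show ?thesis using False A4 i by auto
  next
    case False then show ?thesis using A3 i j by auto
  qed
  then show ?thesis unfolding F_def by simp
qed

lemma link_edge: assumes "(a, b) \<in> link_rel (edges p n)"
  obtains u j where "u \<in> verts p n" "j \<in> {1..p}" "(a = u \<and> b = star_gen j u) \<or> (a = star_gen j u \<and> b = u)"
proof -
  from assms obtain x where x: "x \<in> edges p n" "ends x = {a, b}" unfolding link_rel_def by auto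
  obtain u j where "x = (u, j)" by (cases x)
  then have "u \<in> verts p n" "j \<in> {1..p}" "{u, star_gen j u} = {a, b}" using x unfolding edges_def ends_def by auto
  then show ?thesis using that doubleton_eq_iff[of u "star_gen j u" a b] by metis
qed

lemma lower: assumes i: "i \<in> {1..p}" shows "(a, b) \<in> link_rel (edges p n) ^^ k \<Longrightarrow> F i n b \<le> F i n a + k"
proof (induction k arbitrary: b)
  case 0 then show ?case by simp
next
  case (Suc k)
  from Suc.prems obtain y where y: "(a, y) \<in> link_rel (edges p n) ^^ k" "(y, b) \<in> link_rel (edges p n)"
    by (rule relpow_Suc_E)
  from y(2) obtain u j where "u \<in> verts p n" "j \<in> {1..p}" "(y = u \<and> b = star_gen j u) \<or> (y = star_gen j u \<and> b = u)"
    by (rule link_edge)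
  then have "F i n b \<le> F i n y + 1" using Lip[OF i] by blast
  then show ?case using Suc.IH[OF y(1)] by simp
qed

lemma step_rel: assumes "u \<in> verts p n" "j \<in> {1..p}"
  shows "(u, star_gen j u) \<in> link_rel (edges p n)" "(star_gen j u, u) \<in> link_rel (edges p n)"
proof -
  have x: "(u, j) \<in> edges p n" using assms unfolding edges_def by auto
  show "(u, star_gen j u) \<in> link_rel (edges p n)" unfolding link_rel_def
    using x by (auto simp: ends_def intro!: bexI[of _ "(u,j)"])
  show "(star_gen j u, u) \<in> link_rel (edges p n)" unfolding link_rel_def
    using x by (auto simp: ends_def intro!: bexI[of _ "(u,j)"])
qed

lemma pow_verts: assumes i: "i \<in> {1..p}" shows "(star_gen i ^^ k) (zeros n) \<in> verts p n"
proof -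
  have "set (zeros n) \<subseteq> {0,i}" by (auto simp: zeros_def)
  then have "set ((star_gen i ^^ k) (zeros n)) \<subseteq> {0,i}" by (rule pow_01)
  then show ?thesis using i unfolding verts_def by (auto simp: zeros_def)
qed

lemma fwd: assumes i: "i \<in> {1..p}" shows "(zeros n, (star_gen i ^^ k) (zeros n)) \<in> link_rel (edges p n) ^^ k"
proof (induction k)
  case 0 then show ?case by simp
next
  case (Suc k)
  have "((star_gen i ^^ k) (zeros n), star_gen i ((star_gen i ^^ k) (zeros n))) \<in> link_rel (edges p n)"
    using step_rel(1)[OF pow_verts[OF i] i] by blast
  then show ?case using relpow_Suc_I[OF Suc] by simp
qed

lemma bwd: assumes i: "i \<in> {1..p}" shows "((star_gen i ^^ (a + k)) (zeros n), (star_gen i ^^ a) (zeros n)) \<in> link_rel (edges p n) ^^ k"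
proof (induction k arbitrary: a)
  case 0 then show ?case by simp
next
  case (Suc k)
  have st: "(star_gen i ((star_gen i ^^ a) (zeros n)), (star_gen i ^^ a) (zeros n)) \<in> link_rel (edges p n)"
    by (rule step_rel(2)[OF pow_verts[OF i] i])
  have ih: "((star_gen i ^^ (Suc a + k)) (zeros n), (star_gen i ^^ Suc a) (zeros n)) \<in> link_rel (edges p n) ^^ k"
    by (rule Suc.IH)
  have "((star_gen i ^^ (Suc a + k)) (zeros n), (star_gen i ^^ a) (zeros n)) \<in> link_rel (edges p n) ^^ Suc k"
    using relpow_Suc_I[OF ih] st by simp
  moreover have "Suc a + k = a + Suc k" by simp
  ultimately show ?case by metis
qed

lemma gdist_cd: assumes i: "i \<in> {1..p}" and v: "v \<in> cyc i n"
  shows "gdist p n (zeros n) v = cd i n v"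
  unfolding gdist_def
proof (rule Least_equality)
  have i0: "i \<noteq> 0" using i by auto
  let ?k = "pos i n v"
  have k: "?k < 2^n" "(star_gen i ^^ ?k) (zeros n) = v" using cyc_pos[OF i0 v] by auto
  show "(zeros n, v) \<in> link_rel (edges p n) ^^ cd i n v"
  proof (cases "?k \<le> 2^n - ?k")
    case True then show ?thesis using fwd[OF i, where n=n and k="?k"] k unfolding cd_def by simp
  next
    case False
    have "(star_gen i ^^ (?k + (2^n - ?k))) (zeros n) = zeros n" using k per[OF i0] by simp
    then show ?thesis using bwd[OF i, where n=n and a="?k" and k="2^n - ?k"] k False unfolding cd_def by simp
  qed
  fix y assume y: "(zeros n, v) \<in> link_rel (edges p n) ^^ y"
  have "F i n v \<le> F i n (zeros n) + y" using lower[OF i y] .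
  moreover have "F i n v = cd i n v" unfolding F_def using v cyc_char[OF i0] A2 by auto
  moreover have "F i n (zeros n) = 0"
  proof -
    have "att i (zeros n) = zeros n" by (rule A2) (auto simp: zeros_def)
    moreover have "pos i n (zeros n) = 0" using pos_pow[OF i0, of n 0] by simp
    ultimately show ?thesis unfolding F_def cd_def by simp
  qed
  ultimately show "cd i n v \<le> y" by simp
qed


definition th :: "nat \<Rightarrow> nat \<Rightarrow> nat list \<Rightarrow> nat list \<Rightarrow> nat list" where
  "th i m s u = take m u @ i # s"

lemma K: assumes "j \<noteq> 0" "i \<noteq> 0" "j \<noteq> i \<or> \<not> set t \<subseteq> {0,i}"
  shows "star_gen j (t @ i # r) = star_gen j t @ i # r"
  using assms by (auto simp: e_append)

lemma M: assumes "star_gen j r = i # s" "j \<noteq> 0" "i \<noteq> 0" "j \<noteq> i" shows "r = i # s"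
  using assms by (cases r) (auto split: if_splits)

lemma deco_all_iff: "i \<noteq> 0 \<Longrightarrow> (u, j) \<in> deco_edges_all p n i \<longleftrightarrow>
   u \<in> verts p n \<and> j \<in> {1..p} \<and> \<not> (j = i \<and> set u \<subseteq> {0,i})"
  unfolding deco_edges_all_def edges_def using cyc_char[of i n] verts_len[of u p n] by auto

lemma D_back: assumes i: "i \<in> {1..p}" and x: "(u, j) \<in> deco_edges_all p n i"
  and d: "drop m (star_gen j u) = i # s" and s: "set s \<subseteq> {0,i}"
  shows "drop m u = i # s"
proof -
  have i0: "i \<noteq> 0" using i by auto
  have x': "u \<in> verts p n" "j \<in> {1..p}" "\<not> (j = i \<and> set u \<subseteq> {0,i})" using x deco_all_iff[OF i0] by auto
  define t where "t = take m u"
  define r where "r = drop m u"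
  have u: "u = t @ r" unfolding t_def r_def by simp
  have "m < length (star_gen j u)" using d by (metis drop_eq_Nil2 list.distinct(1) not_le_imp_less)
  then have lt: "length t = m" unfolding t_def by simp
  have eu: "star_gen j u = star_gen j t @ (if set t \<subseteq> {0} then star_gen j r else r)"
    unfolding u by (rule e_append)
  have dd: "(if set t \<subseteq> {0} then star_gen j r else r) = i # s" using d eu lt by simp
  show ?thesis
  proof (cases "set t \<subseteq> {0}")
    case False then show ?thesis using dd unfolding r_def by simp
  next
    case True
    then have er: "star_gen j r = i # s" using dd by simp
    show ?thesis
    proof (cases "j = i")
      case True
      have "set (star_gen i r) \<subseteq> {0,i}" using er s i0 True by simp
      then have "set r \<subseteq> {0,i}" using set_e_01[of i r] by simp
      then have "set u \<subseteq> {0,i}" using \<open>set t \<subseteq> {0}\<close> u by auto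
      then have False using x'(3) True by simp
      then show ?thesis ..
    next
      case False then show ?thesis using M[OF er] x'(2) i0 unfolding r_def by auto
    qed
  qed
qed

lemma S: assumes i: "i \<in> {1..p}" and x: "(u, j) \<in> deco_edges_all p n i"
  and du: "drop m u = i # s" and s: "set s \<subseteq> {0,i}" and s': "set s' \<subseteq> {0,i}" "length s' = length s"
  shows "star_gen j u \<in> verts p n" "drop m (star_gen j u) = i # s"
    "(th i m s' u, j) \<in> deco_edges_all p n i" "star_gen j (th i m s' u) = th i m s' (star_gen j u)"
    "drop m (th i m s' u) = i # s'"
proof -
  have i0: "i \<noteq> 0" using i by auto
  have x': "u \<in> verts p n" "j \<in> {1..p}" "\<not> (j = i \<and> set u \<subseteq> {0,i})" using x deco_all_iff[OF i0] by auto
  define t where "t = take m u"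
  have u: "u = t @ i # s" unfolding t_def using du by (metis append_take_drop_id)
  have lt: "length t = m" unfolding t_def using du by (metis drop_eq_Nil2 length_take list.distinct(1) min_def not_le_imp_less)
  have cond: "j \<noteq> i \<or> \<not> set t \<subseteq> {0,i}" using x'(3) u s by auto
  have j0: "j \<noteq> 0" using x'(2) by auto
  have eu: "star_gen j u = star_gen j t @ i # s" unfolding u by (rule K[OF j0 i0 cond])
  show "star_gen j u \<in> verts p n" using e_verts x' by blast
  show "drop m (star_gen j u) = i # s" using eu lt by simp
  have thu: "th i m s' u = t @ i # s'" unfolding th_def t_def by simp
  show "drop m (th i m s' u) = i # s'" using thu lt by simp
  have tv: "th i m s' u \<in> verts p n"
  proof -
    have "set u \<subseteq> {0..p}" "length u = n" using x'(1) unfolding verts_def by auto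
    then show ?thesis using thu u s' i unfolding verts_def by auto
  qed
  show "(th i m s' u, j) \<in> deco_edges_all p n i"
    using deco_all_iff[OF i0] tv x'(2) cond thu by auto
  show "star_gen j (th i m s' u) = th i m s' (star_gen j u)"
  proof -
    have "th i m s' (star_gen j u) = star_gen j t @ i # s'" unfolding eu th_def using lt by simp
    then show ?thesis using thu K[OF j0 i0 cond] by simp
  qed
qed

lemma iso_map:
  assumes i: "i \<in> {1..p}" and v: "v = replicate m 0 @ i # s" and v': "v' = replicate m 0 @ i # s'"
    and s: "set s \<subseteq> {0,i}" and s': "set s' \<subseteq> {0,i}" and l: "length s' = length s" and vn: "length v = n"
  shows "\<forall>b \<in> deco_verts p n i v. drop m b = i # s \<and> th i m s' b \<in> deco_verts p n i v'"
    "\<forall>x \<in> deco_edges p n i v. (th i m s' (fst x), snd x) \<in> deco_edges p n i v' \<and>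
        ends (th i m s' (fst x), snd x) = th i m s' ` ends x"
proof -
  let ?R = "link_rel (deco_edges_all p n i)"
  have P: "drop m b = i # s \<and> (v', th i m s' b) \<in> ?R\<^sup>*" if "(v, b) \<in> ?R\<^sup>*" for b
    using that
  proof (induction rule: rtrancl_induct)
    case base
    have "th i m s' v = v'" unfolding th_def v v' by simp
    then show ?case using v by simp
  next
    case (step y z)
    from step(2) obtain x where x: "x \<in> deco_edges_all p n i" "ends x = {y, z}" unfolding link_rel_def by auto
    obtain u j where xu: "x = (u, j)" by (cases x)
    have yz: "{u, star_gen j u} = {y, z}" using x(2) xu unfolding ends_def by simp
    have xd: "(u, j) \<in> deco_edges_all p n i" using x xu by simp
    have du: "drop m u = i # s"
    proof (cases "y = u")
      case True then show ?thesis using step(3) by simp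
    next
      case False then have "y = star_gen j u" using yz by blast
      then show ?thesis using D_back[OF i xd _ s] step(3) by simp
    qed
    note SS = S[OF i xd du s s' l]
    have z: "z = u \<or> z = star_gen j u" using yz by blast
    have "drop m z = i # s" using z du SS(2) by blast
    moreover have "(th i m s' y, th i m s' z) \<in> ?R"
    proof -
      have "ends (th i m s' u, j) = {th i m s' y, th i m s' z}"
        unfolding ends_def using SS(4) yz by (auto simp: doubleton_eq_iff)
      then show ?thesis unfolding link_rel_def using SS(3) by blast
    qed
    ultimately show ?case using step(3) by (meson rtrancl.rtrancl_into_rtrancl)
  qed
  show A: "\<forall>b \<in> deco_verts p n i v. drop m b = i # s \<and> th i m s' b \<in> deco_verts p n i v'"
    unfolding deco_verts_def using P by auto
  show "\<forall>x \<in> deco_edges p n i v. (th i m s' (fst x), snd x) \<in> deco_edges p n i v' \<and>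
        ends (th i m s' (fst x), snd x) = th i m s' ` ends x"
  proof
    fix x assume x: "x \<in> deco_edges p n i v"
    obtain u j where xu: "x = (u, j)" by (cases x)
    have xd: "(u, j) \<in> deco_edges_all p n i" and uv: "u \<in> deco_verts p n i v"
      using x xu unfolding deco_edges_def by auto
    have du: "drop m u = i # s" using A uv by blast
    note SS = S[OF i xd du s s' l]
    have "th i m s' u \<in> deco_verts p n i v'" using A uv by blast
    then have "(th i m s' u, j) \<in> deco_edges p n i v'" using SS(3) unfolding deco_edges_def by simp
    moreover have "ends (th i m s' u, j) = th i m s' ` ends (u, j)"
      unfolding ends_def using SS(4) by simp
    ultimately show "(th i m s' (fst x), snd x) \<in> deco_edges p n i v' \<and>
        ends (th i m s' (fst x), snd x) = th i m s' ` ends x" using xu by simp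
  qed
qed

lemma th_inv: "drop m u = i # s \<Longrightarrow> th i m s (th i m s' u) = u"
proof -
  assume d: "drop m u = i # s"
  have "m < length u" using d by (metis drop_eq_Nil2 list.distinct(1) not_le_imp_less)
  then have "take m (th i m s' u) = take m u" unfolding th_def by simp
  then show ?thesis unfolding th_def using d by (metis append_take_drop_id)
qed

lemma iso_main:
  assumes i: "i \<in> {1..p}" and v: "v = replicate m 0 @ i # s" and v': "v' = replicate m 0 @ i # s'"
    and s: "set s \<subseteq> {0,i}" and s': "set s' \<subseteq> {0,i}" and l: "length s' = length s" and vn: "length v = n"
  shows "mg_iso (deco_verts p n i v) (deco_edges p n i v) (deco_verts p n i v') (deco_edges p n i v') ends"
proof -
  have vn': "length v' = n" using vn l v v' by simp
  note A = iso_map[OF i v v' s s' l vn]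
  note B = iso_map[OF i v' v s' s l[symmetric] vn']
  let ?f = "th i m s'" and ?f' = "th i m s"
  let ?g = "\<lambda>x. (th i m s' (fst x), snd x)" and ?g' = "\<lambda>x. (th i m s (fst x), snd x)"
  have bf: "bij_betw ?f (deco_verts p n i v) (deco_verts p n i v')"
  proof (rule bij_betw_byWitness[where f'="?f'"])
    show "\<forall>a\<in>deco_verts p n i v. ?f' (?f a) = a" using A(1) th_inv by blast
    show "\<forall>a\<in>deco_verts p n i v'. ?f (?f' a) = a" using B(1) th_inv by blast
    show "?f ` deco_verts p n i v \<subseteq> deco_verts p n i v'" using A(1) by blast
    show "?f' ` deco_verts p n i v' \<subseteq> deco_verts p n i v" using B(1) by blast
  qed
  have fst_d: "\<forall>x\<in>deco_edges p n i v. drop m (fst x) = i # s" using A(1) unfolding deco_edges_def by auto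
  have fst_d': "\<forall>x\<in>deco_edges p n i v'. drop m (fst x) = i # s'" using B(1) unfolding deco_edges_def by auto
  have bg: "bij_betw ?g (deco_edges p n i v) (deco_edges p n i v')"
  proof (rule bij_betw_byWitness[where f'="?g'"])
    show "\<forall>a\<in>deco_edges p n i v. ?g' (?g a) = a" using fst_d th_inv by auto
    show "\<forall>a\<in>deco_edges p n i v'. ?g (?g' a) = a" using fst_d' th_inv by auto
    show "?g ` deco_edges p n i v \<subseteq> deco_edges p n i v'" using A(2) by blast
    show "?g' ` deco_edges p n i v' \<subseteq> deco_edges p n i v" using B(2) by blast
  qed
  show ?thesis unfolding mg_iso_def using bf bg A(2) by blast
qed


lemma min_arith: fixes a b N :: nat assumes "a < N" "b < N" "min a (N - a) = min b (N - b)"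
  shows "a = b \<or> a = N - b"
proof (cases "a \<le> N - a")
  case True then show ?thesis using assms by (cases "b \<le> N - b") (simp_all add: min_def)
next
  case False then show ?thesis using assms by (cases "b \<le> N - b") (simp_all add: min_def)
qed

theorem proposition4p9:
  fixes p n i :: nat and v :: "nat list"
  assumes "p \<ge> 1" and "n \<ge> 1" and "i \<in> {1..p}" and "v \<in> cyc i n"
  shows "mg_iso (deco_verts p n i v) (deco_edges p n i v)
                (deco_verts p n i (phi i n v)) (deco_edges p n i (phi i n v)) ends
         \<and> {v' \<in> cyc i n. gdist p n (zeros n) v' = gdist p n (zeros n) v} = {v, phi i n v}"
proof
  have i: "i \<in> {1..p}" and vc: "v \<in> cyc i n" using assms by auto
  have i0: "i \<noteq> 0" using i by auto
  have ph: "phi i n v = refl i v" by (rule phi_refl[OF i0 vc])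
  have vs: "set v \<subseteq> {0,i}" "length v = n" using vc cyc_char[OF i0] by auto
  show "mg_iso (deco_verts p n i v) (deco_edges p n i v)
                (deco_verts p n i (phi i n v)) (deco_edges p n i (phi i n v)) ends"
  proof (cases "v = replicate (length v) 0")
    case True
    then have "v = zeros n" using vs by (simp add: zeros_def)
    then have "phi i n v = v" using ph refl_zeros[OF i0] by simp
    have "mg_iso (deco_verts p n i v) (deco_edges p n i v) (deco_verts p n i v) (deco_edges p n i v) ends"
      unfolding mg_iso_def
    proof (intro exI conjI)
      show "bij_betw id (deco_verts p n i v) (deco_verts p n i v)" by (rule bij_betw_id)
      show "bij_betw id (deco_edges p n i v) (deco_edges p n i v)" by (rule bij_betw_id)
      show "\<forall>x\<in>deco_edges p n i v. ends (id x) = id ` ends x" by simp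
    qed
    then show ?thesis using \<open>phi i n v = v\<close> by simp
  next
    case False
    then obtain m s where v: "v = replicate m 0 @ i # s" using decomp[OF vs(1)] by blast
    have s: "set s \<subseteq> {0,i}" using vs v by auto
    have s': "set (map (swp i) s) \<subseteq> {0,i}" using s by (auto simp: swp_def)
    have pv: "phi i n v = replicate m 0 @ i # map (swp i) s" using ph v refl_rep[OF i0] by simp
    show ?thesis unfolding pv by (rule iso_main[OF i v refl s s' _ vs(2)]) simp
  qed
  let ?N = "2^n :: nat"
  let ?k = "pos i n v"
  have k: "?k < ?N" "(star_gen i ^^ ?k) (zeros n) = v" using cyc_pos[OF i0 vc] by auto
  have phic: "phi i n v \<in> cyc i n" unfolding phi_pos cyc_def by blast
  have pphi: "pos i n (phi i n v) = (?N - ?k) mod ?N" unfolding phi_pos by (rule pos_pow[OF i0])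
  have cdphi: "cd i n (phi i n v) = cd i n v"
  proof (cases "?k = 0")
    case True then show ?thesis unfolding cd_def pphi by simp
  next
    case False then have "(?N - ?k) mod ?N = ?N - ?k" using k by simp
    then show ?thesis unfolding cd_def pphi using k by simp
  qed
  show "{v' \<in> cyc i n. gdist p n (zeros n) v' = gdist p n (zeros n) v} = {v, phi i n v}"
  proof (intro set_eqI iffI)
    fix w assume "w \<in> {v, phi i n v}"
    then show "w \<in> {v' \<in> cyc i n. gdist p n (zeros n) v' = gdist p n (zeros n) v}"
      using vc phic gdist_cd[OF i] cdphi by auto
  next
    fix w assume "w \<in> {v' \<in> cyc i n. gdist p n (zeros n) v' = gdist p n (zeros n) v}"
    then have wc: "w \<in> cyc i n" and cdw: "cd i n w = cd i n v" using gdist_cd[OF i] vc by auto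
    let ?j = "pos i n w"
    have j: "?j < ?N" "(star_gen i ^^ ?j) (zeros n) = w" using cyc_pos[OF i0 wc] by auto
    have "min ?j (?N - ?j) = min ?k (?N - ?k)" using cdw unfolding cd_def .
    then have "?j = ?k \<or> ?j = ?N - ?k" by (rule min_arith[OF j(1) k(1)])
    then have "w = v \<or> w = phi i n v"
    proof
      assume "?j = ?k" then show ?thesis using j(2) k(2) by metis
    next
      assume "?j = ?N - ?k" then show ?thesis using j(2) phi_pos[of i n v] by metis
    qed
    then show "w \<in> {v, phi i n v}" by blast
  qed
qed

end
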